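(* Let $T\in\mathbb{R}^{n\times n\times n}$ with trilinear form $f(x,y,z)=\sum_{i,j,k}T_{ijk}x_iy_jz_k$ and $z$-slices $Z_1,\dots,Z_n$. Then $f$ can be written $f(x,y,z)=g(Ax,By,Cz)$ with $A,B\in M_n(\mathbb{R})$ orthogonal, $C\in M_n(\mathbb{R})$ arbitrary, and $g(x,y,z)=\sum_{i=1}^n\alpha_ix_iy_iz_i$ ($\alpha_i\in\mathbb{R}$), if and only if the matrices $Z_kZ_l^T$ and $Z_k^TZ_l$ are symmetric for all $k,l\in\{1,\dots,n\}$.
   Context: The $z$-slices of $T$ are the matrices $Z_k=(T_{ijk})_{1\le i,j\le n}$, i.e. the matrices of the bilinear forms $\partial f/\partial z_k$ in $(x,y)$. A real matrix $A$ is orthogonal if $A^TA=\mathrm{Id}$. *)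

theory Defs
  imports "HOL-Analysis.Analysis"
begin

definition trilinear_form :: "('n::finite \<Rightarrow> 'n \<Rightarrow> 'n \<Rightarrow> real) \<Rightarrow> real^'n \<Rightarrow> real^'n \<Rightarrow> real^'n \<Rightarrow> real" where
  "trilinear_form T x y z = (\<Sum>i\<in>UNIV. \<Sum>j\<in>UNIV. \<Sum>k\<in>UNIV. T i j k * x$i * y$j * z$k)"

definition diag_form :: "('n::finite \<Rightarrow> real) \<Rightarrow> real^'n \<Rightarrow> real^'n \<Rightarrow> real^'n \<Rightarrow> real" where
  "diag_form \<alpha> x y z = (\<Sum>i\<in>UNIV. \<alpha> i * x$i * y$i * z$i)"

definition zslice :: "('n::finite \<Rightarrow> 'n \<Rightarrow> 'n \<Rightarrow> real) \<Rightarrow> 'n \<Rightarrow> real^'n^'n" where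
  "zslice T k = (\<chi> i j. T i j k)"

definition symmetric_matrix :: "real^'n^'n \<Rightarrow> bool" where
  "symmetric_matrix M \<longleftrightarrow> transpose M = M"

end

theory Submission
  imports Defs
begin


lemma quad_zero:
  fixes b c :: real
  assumes "\<And>t. 2*t*b + t^2*c \<le> 0"
  shows "b = 0"
proof -
  define K where "K = \<bar>c\<bar>+1"
  have p: "K > 0" unfolding K_def by simp
  have "2*(b/K)*b + (b/K)^2*c \<le> 0" by (rule assms)
  moreover have "2*(b/K)*b + (b/K)^2*c = (b*b)*(2*K+c)/(K*K)"
    using p by (simp add: field_simps power2_eq_square)
  ultimately have "(b*b)*(2*K+c)/(K*K) \<le> 0" by simp
  moreover have "2*K+c > 0" unfolding K_def by (simp add: abs_if)
  moreover have "K*K > 0" using p by simp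
  ultimately have "b*b \<le> 0"
    by (smt (verit) divide_pos_pos mult_pos_pos zero_le_square)
  thus ?thesis by (metis mult_le_0_iff antisym)
qed

lemma eigen_exists:
  fixes M :: "real^'n \<Rightarrow> real^'n"
  assumes lin: "linear M" and sym: "\<And>x y. x \<bullet> M y = M x \<bullet> y"
    and W: "subspace W" "W \<noteq> {0}" and inv: "\<And>x. x \<in> W \<Longrightarrow> M x \<in> W"
  shows "\<exists>w\<in>W. w \<noteq> 0 \<and> (\<exists>c. M w = c *\<^sub>R w)"
proof -
  let ?S = "W \<inter> sphere 0 1"
  have cS: "compact ?S"
    by (simp add: W(1) closed_subspace closed_Int_compact)
  obtain x0 where x0: "x0 \<in> W" "x0 \<noteq> 0" using W subspace_0[OF W(1)] by auto
  have "x0 /\<^sub>R norm x0 \<in> ?S" using x0 W(1) by (simp add: subspace_scale)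
  hence ne: "?S \<noteq> {}" by blast
  have cont: "continuous_on ?S (\<lambda>x. x \<bullet> M x)"
    by (intro continuous_intros linear_continuous_on lin[THEN linear_conv_bounded_linear[THEN iffD1]])
  obtain w where w: "w \<in> ?S" and wmax: "\<And>y. y \<in> ?S \<Longrightarrow> y \<bullet> M y \<le> w \<bullet> M w"
    using continuous_attains_sup[OF cS ne cont] by blast
  define c where "c = w \<bullet> M w"
  have ww: "w \<bullet> w = 1" using w by (simp add: dot_square_norm)
  have bound: "x \<bullet> M x \<le> c * (x \<bullet> x)" if "x \<in> W" for x
  proof (cases "x = 0")
    case True thus ?thesis by (simp add: linear_0[OF lin])
  next
    case False
    have "x /\<^sub>R norm x \<in> ?S" using that False W(1) by (simp add: subspace_scale)
    hence "(x /\<^sub>R norm x) \<bullet> M (x /\<^sub>R norm x) \<le> c" using wmax c_def by blast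
    hence "(x \<bullet> M x) / (norm x)^2 \<le> c"
      by (simp add: linear_scale[OF lin] power2_eq_square divide_inverse mult_ac)
    moreover have "(norm x)^2 = x \<bullet> x" by (simp add: power2_norm_eq_inner)
    moreover have "norm x > 0" using False by simp
    ultimately show ?thesis by (simp add: divide_le_eq mult.commute)
  qed
  define h where "h = M w - c *\<^sub>R w"
  have hW: "h \<in> W" unfolding h_def using w inv W(1)
    by (simp add: subspace_diff subspace_scale)
  have "2*t*(h \<bullet> h) + t^2*(h \<bullet> M h - c * (h \<bullet> h)) \<le> 0" for t
  proof -
    have "w + t *\<^sub>R h \<in> W" using w hW W(1) by (simp add: subspace_add subspace_scale)
    hence b: "(w + t *\<^sub>R h) \<bullet> M (w + t *\<^sub>R h) \<le> c * ((w + t *\<^sub>R h) \<bullet> (w + t *\<^sub>R h))"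
      by (rule bound)
    have e1: "(w + t *\<^sub>R h) \<bullet> M (w + t *\<^sub>R h) = c + 2*t*(h \<bullet> M w) + t^2*(h \<bullet> M h)"
      using sym[of h w] c_def
      by (simp add: linear_add[OF lin] linear_scale[OF lin] inner_add_left inner_add_right
          inner_commute[of w "M h"] power2_eq_square algebra_simps)
    have e2: "(w + t *\<^sub>R h) \<bullet> (w + t *\<^sub>R h) = 1 + 2*t*(h \<bullet> w) + t^2*(h \<bullet> h)"
      using ww by (simp add: inner_add_left inner_add_right inner_commute[of w h] power2_eq_square algebra_simps)
    have e3: "h \<bullet> h = h \<bullet> M w - c * (h \<bullet> w)" unfolding h_def
      by (simp add: inner_diff_left inner_diff_right algebra_simps)
    have i: "c + 2*t*(h \<bullet> M w) + t^2*(h \<bullet> M h) \<le> c * (1 + 2*t*(h \<bullet> w) + t^2*(h \<bullet> h))"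
      using b unfolding e1 e2 .
    have e4: "h \<bullet> M w = h \<bullet> h + c * (h \<bullet> w)" using e3 by simp
    have "2*t*(h \<bullet> h) + t^2*(h \<bullet> M h - c * (h \<bullet> h)) = (c + 2*t*(h \<bullet> M w) + t^2*(h \<bullet> M h)) - c * (1 + 2*t*(h \<bullet> w) + t^2*(h \<bullet> h))"
      unfolding e4 by (simp add: algebra_simps)
    thus ?thesis using i by simp
  qed
  hence "h \<bullet> h = 0" by (rule quad_zero)
  hence "M w = c *\<^sub>R w" unfolding h_def by simp
  moreover have "w \<noteq> 0" using w by auto
  ultimately show ?thesis using w by blast
qed

lemma common_eigen:
  fixes M :: "'i \<Rightarrow> real^'n \<Rightarrow> real^'n"
  assumes lin: "\<And>i. linear (M i)" and sym: "\<And>i x y. x \<bullet> M i y = M i x \<bullet> y"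
    and comm: "\<And>i j x. M i (M j x) = M j (M i x)"
    and V: "subspace V" "V \<noteq> {0}" and inv: "\<And>i x. x \<in> V \<Longrightarrow> M i x \<in> V"
  shows "\<exists>v\<in>V. norm v = 1 \<and> (\<forall>i. \<exists>c. M i v = c *\<^sub>R v)"
proof -
  define P where "P W \<longleftrightarrow> subspace W \<and> W \<subseteq> V \<and> W \<noteq> {0} \<and> (\<forall>i. \<forall>x\<in>W. M i x \<in> W)" for W
  have PV: "P V" using V inv unfolding P_def by auto
  define d where "d = (LEAST d. \<exists>W. P W \<and> dim W = d)"
  have "\<exists>W. P W \<and> dim W = d" unfolding d_def
    by (rule LeastI[where k = "dim V"]) (use PV in blast)
  then obtain W where PW: "P W" and dW: "dim W = d" by blast
  have minW: "dim W \<le> dim W'" if "P W'" for W'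
    unfolding dW d_def by (rule Least_le) (use that in blast)
  have scal: "\<exists>c. \<forall>x\<in>W. M i x = c *\<^sub>R x" for i
  proof -
    have sW: "subspace W" and WV: "W \<subseteq> V" and nz: "W \<noteq> {0}" and iW: "\<And>j x. x \<in> W \<Longrightarrow> M j x \<in> W"
      using PW unfolding P_def by auto
    obtain w c where w: "w \<in> W" "w \<noteq> 0" and wc: "M i w = c *\<^sub>R w"
      using eigen_exists[OF lin sym sW nz iW] by blast
    define E where "E = {x\<in>W. M i x = c *\<^sub>R x}"
    have sE: "subspace E" unfolding E_def subspace_def
      using sW by (auto simp: subspace_def linear_add[OF lin] linear_scale[OF lin] linear_0[OF lin] scaleR_add_right)
    have "P E" unfolding P_def
    proof (intro conjI allI ballI)
      show "subspace E" by (rule sE)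
      show "E \<subseteq> V" using WV unfolding E_def by auto
      show "E \<noteq> {0}" using w wc unfolding E_def by auto
      fix j x assume "x \<in> E"
      thus "M j x \<in> E" unfolding E_def
        using iW comm[of i j x] by (auto simp: linear_scale[OF lin])
    qed
    hence "dim W \<le> dim E" by (rule minW)
    moreover have "E \<subseteq> W" unfolding E_def by auto
    ultimately have "E = W" using subspace_dim_equal[OF sE sW] by blast
    thus ?thesis unfolding E_def by blast
  qed
  then obtain cf where cf: "\<And>i x. x \<in> W \<Longrightarrow> M i x = cf i *\<^sub>R x" by metis
  have sW: "subspace W" and WV: "W \<subseteq> V" and nz: "W \<noteq> {0}" using PW unfolding P_def by auto
  obtain x0 where x0: "x0 \<in> W" "x0 \<noteq> 0" using nz subspace_0[OF sW] by auto
  have "x0 /\<^sub>R norm x0 \<in> W" using x0 sW by (simp add: subspace_scale)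
  moreover have "norm (x0 /\<^sub>R norm x0) = 1" using x0 by simp
  ultimately show ?thesis using cf WV by blast
qed



lemma ZZ_comm:
  fixes Z :: "'k \<Rightarrow> real^'n^'n"
  assumes H1: "\<And>k l. Z l ** transpose (Z k) = Z k ** transpose (Z l)"
    and H2: "\<And>k l. transpose (Z l) ** Z k = transpose (Z k) ** Z l"
  shows "(transpose (Z k) ** Z l) ** (transpose (Z p) ** Z q) = (transpose (Z k) ** Z p) ** (transpose (Z l) ** Z q)"
    and "(transpose (Z k) ** Z l) ** (transpose (Z p) ** Z q) = (transpose (Z p) ** Z q) ** (transpose (Z k) ** Z l)"
proof -
  have a: "(transpose (Z k) ** Z l) ** (transpose (Z p) ** Z q) = transpose (Z k) ** (Z l ** transpose (Z p)) ** Z q"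
    for k l p q by (simp add: matrix_mul_assoc)
  have b: "transpose (Z a1) ** (Z a2 ** transpose (Z a3)) ** Z a4 = (transpose (Z a1) ** Z a3) ** (transpose (Z a2) ** Z a4)"
    for a1 a2 a3 a4 by (subst H1[where k=a3 and l=a2]) (simp add: matrix_mul_assoc)
  show 1: "(transpose (Z k) ** Z l) ** (transpose (Z p) ** Z q) = (transpose (Z k) ** Z p) ** (transpose (Z l) ** Z q)"
    for k l p q using a b by simp
  show "(transpose (Z k) ** Z l) ** (transpose (Z p) ** Z q) = (transpose (Z p) ** Z q) ** (transpose (Z k) ** Z l)"
  proof -
    have "(transpose (Z k) ** Z l) ** (transpose (Z p) ** Z q) = (transpose (Z k) ** Z p) ** (transpose (Z l) ** Z q)" by (rule 1)
    also have "\<dots> = (transpose (Z p) ** Z k) ** (transpose (Z l) ** Z q)" by (simp add: H2)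
    also have "\<dots> = (transpose (Z p) ** Z l) ** (transpose (Z k) ** Z q)" by (rule 1)
    also have "\<dots> = (transpose (Z p) ** Z l) ** (transpose (Z q) ** Z k)" by (simp add: H2[of q k])
    also have "\<dots> = (transpose (Z p) ** Z q) ** (transpose (Z l) ** Z k)" by (rule 1)
    also have "\<dots> = (transpose (Z p) ** Z q) ** (transpose (Z k) ** Z l)" by (simp add: H2[of k l])
    finally show ?thesis .
  qed
qed

lemma dot_transpose: "(x::real^'n) \<bullet> (A *v y) = (transpose A *v x) \<bullet> y"
  by (simp add: dot_lmul_matrix)

definition pair_ok where
  "pair_ok (Z :: 'k \<Rightarrow> real^'n^'n) U V u v \<longleftrightarrow> u \<in> U \<and> v \<in> V \<and> norm u = 1 \<and> norm v = 1 \<and>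
     (\<forall>k x. x \<bullet> v = 0 \<longrightarrow> u \<bullet> (Z k *v x) = 0) \<and> (\<forall>k y. y \<bullet> u = 0 \<longrightarrow> y \<bullet> (Z k *v v) = 0)"

lemma pair_case1:
  fixes Z :: "'k \<Rightarrow> real^'n^'n"
  assumes H1: "\<And>k l. Z l ** transpose (Z k) = Z k ** transpose (Z l)"
    and H2: "\<And>k l. transpose (Z l) ** Z k = transpose (Z k) ** Z l"
    and v: "v \<in> V" "norm v = 1"
    and c: "\<And>k l. transpose (Z k) *v (Z l *v v) = c k l *\<^sub>R v"
    and nz: "Z k0 *v v \<noteq> 0"
    and inv: "\<And>k x. x \<in> V \<Longrightarrow> Z k *v x \<in> U" and sU: "subspace U"
  shows "\<exists>u. pair_ok Z U V u v"
proof -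
  define w where "w = Z k0 *v v"
  define u where "u = w /\<^sub>R norm w"
  have wU: "w \<in> U" unfolding w_def using inv v by blast
  have nw: "norm w > 0" using nz unfolding w_def by simp
  have uU: "u \<in> U" unfolding u_def using wU sU by (simp add: subspace_scale)
  have nu: "norm u = 1" unfolding u_def using nw by simp
  have vv: "v \<bullet> v = 1" using v by (simp add: dot_square_norm)
  have b: "u \<bullet> (Z k *v x) = 0" if "x \<bullet> v = 0" for k x
  proof -
    have "u \<bullet> (Z k *v x) = (transpose (Z k) *v u) \<bullet> x" by (rule dot_transpose)
    also have "transpose (Z k) *v u = (c k k0 / norm w) *\<^sub>R v"
      unfolding u_def w_def using c[of k k0]
      by (simp add: matrix_vector_mult_scaleR divide_inverse)
    finally show ?thesis using that by (simp add: inner_commute)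
  qed
  have par: "Z k *v v = (c k0 k / c k0 k0) *\<^sub>R w" for k
  proof -
    have m: "c k0 k0 = w \<bullet> w" unfolding w_def
      using c[of k0 k0] dot_transpose[of "Z k0 *v v" "Z k0" v] vv by (simp add: inner_commute)
    hence mpos: "c k0 k0 > 0" using nw by simp
    have ckk: "(Z k *v v) \<bullet> (Z k *v v) = c k k"
      using c[of k k] dot_transpose[of "Z k *v v" "Z k" v] vv by (simp add: inner_commute)
    have ck: "w \<bullet> (Z k *v v) = c k0 k"
    proof -
      have "w \<bullet> (Z k *v v) = (Z k *v v) \<bullet> (Z k0 *v v)" unfolding w_def by (rule inner_commute)
      also have "\<dots> = (transpose (Z k0) *v (Z k *v v)) \<bullet> v" by (rule dot_transpose)
      also have "\<dots> = c k0 k" unfolding c using vv by simp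
      finally show ?thesis .
    qed
    have sq: "c k0 k0 * c k k = c k0 k * c k0 k"
    proof -
      have "transpose (Z k) ** Z k ** (transpose (Z k0) ** Z k0) = transpose (Z k) ** Z k0 ** (transpose (Z k) ** Z k0)"
        by (rule ZZ_comm(1)[OF H1 H2])
      also have "\<dots> = transpose (Z k0) ** Z k ** (transpose (Z k0) ** Z k)"
        by (subst (1 2) H2[of k0 k]) (rule refl)
      finally have "(transpose (Z k) ** Z k ** (transpose (Z k0) ** Z k0)) *v v = (transpose (Z k0) ** Z k ** (transpose (Z k0) ** Z k)) *v v"
        by simp
      hence "(c k0 k0 * c k k) *\<^sub>R v = (c k0 k * c k0 k) *\<^sub>R v"
        by (simp add: matrix_vector_mul_assoc[symmetric] c matrix_vector_mult_scaleR del: transpose_matrix_vector)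
      moreover have "v \<noteq> 0" using v by auto
      ultimately show ?thesis by simp
    qed
    define a where "a = c k0 k / c k0 k0"
    have "(Z k *v v - a *\<^sub>R w) \<bullet> (Z k *v v - a *\<^sub>R w) = c k k - 2*a*c k0 k + a*a*c k0 k0"
      using ckk ck m by (simp add: inner_diff_left inner_diff_right inner_commute[of w "Z k *v v"] algebra_simps)
    also have "\<dots> = c k k - 2*(a*c k0 k) + a*(a*c k0 k0)" by (simp add: algebra_simps)
    also have "\<dots> = 0"
    proof -
      have am: "a * c k0 k0 = c k0 k" using mpos unfolding a_def by simp
      have ak: "a * c k0 k = c k k" using mpos sq unfolding a_def
        by (simp add: divide_eq_eq mult.commute)
      show ?thesis using am ak by simp
    qed
    finally show ?thesis unfolding a_def by simp
  qed
  have d: "y \<bullet> (Z k *v v) = 0" if "y \<bullet> u = 0" for k y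
  proof -
    have "y \<bullet> w = 0" using that nw unfolding u_def by simp
    thus ?thesis unfolding par by simp
  qed
  show ?thesis unfolding pair_ok_def using uU v nu b d by blast
qed



lemma pair_ok_transpose:
  assumes "pair_ok (\<lambda>k. transpose (Z k)) V U v u"
  shows "pair_ok Z U V u v"
  using assms unfolding pair_ok_def
  by (metis dot_transpose inner_commute transpose_transpose)

lemma eigen_side:
  fixes Z :: "'k \<Rightarrow> real^'n^'n"
  assumes H1: "\<And>k l. Z l ** transpose (Z k) = Z k ** transpose (Z l)"
    and H2: "\<And>k l. transpose (Z l) ** Z k = transpose (Z k) ** Z l"
    and sU: "subspace U" and sV: "subspace V" and nV: "V \<noteq> {0}"
    and invV: "\<And>k x. x \<in> V \<Longrightarrow> Z k *v x \<in> U"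
    and invU: "\<And>k y. y \<in> U \<Longrightarrow> transpose (Z k) *v y \<in> V"
  shows "\<exists>v\<in>V. norm v = 1 \<and> (\<exists>c. \<forall>k l. transpose (Z k) *v (Z l *v v) = c k l *\<^sub>R v)"
proof -
  define M where "M p x = (transpose (Z (fst p)) ** Z (snd p)) *v x" for p x
  have lin: "linear (M p)" for p unfolding M_def by (rule matrix_vector_mul_linear)
  have sym: "x \<bullet> M p y = M p x \<bullet> y" for p x y
  proof -
    have "x \<bullet> M p y = (transpose (transpose (Z (fst p)) ** Z (snd p)) *v x) \<bullet> y"
      unfolding M_def by (rule dot_transpose)
    also have "transpose (transpose (Z (fst p)) ** Z (snd p)) = transpose (Z (fst p)) ** Z (snd p)"
      by (simp add: matrix_transpose_mul H2)
    finally show ?thesis unfolding M_def .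
  qed
  have comm: "M p (M q x) = M q (M p x)" for p q x
    unfolding M_def matrix_vector_mul_assoc
    using ZZ_comm(2)[where Z=Z, OF H1 H2] by metis
  have inv: "x \<in> V \<Longrightarrow> M p x \<in> V" for p x
    unfolding M_def matrix_vector_mul_assoc[symmetric] using invV invU by blast
  obtain v where v: "v \<in> V" "norm v = 1" and e: "\<And>p. \<exists>c. M p v = c *\<^sub>R v"
    using common_eigen[where M=M, OF lin sym comm sV nV inv] by blast
  then obtain c where "\<And>p. M p v = c p *\<^sub>R v" by metis
  hence "\<forall>k l. transpose (Z k) *v (Z l *v v) = (\<lambda>k l. c (k,l)) k l *\<^sub>R v"
    unfolding M_def matrix_vector_mul_assoc by (metis fst_conv snd_conv)
  thus ?thesis using v by (intro bexI[of _ v] conjI exI[of _ "\<lambda>k l. c (k,l)"]) auto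
qed

lemma pair_exists:
  fixes Z :: "'k \<Rightarrow> real^'n^'n"
  assumes H1: "\<And>k l. Z l ** transpose (Z k) = Z k ** transpose (Z l)"
    and H2: "\<And>k l. transpose (Z l) ** Z k = transpose (Z k) ** Z l"
    and sU: "subspace U" and sV: "subspace V" and nU: "U \<noteq> {0}" and nV: "V \<noteq> {0}"
    and invV: "\<And>k x. x \<in> V \<Longrightarrow> Z k *v x \<in> U"
    and invU: "\<And>k y. y \<in> U \<Longrightarrow> transpose (Z k) *v y \<in> V"
  shows "\<exists>u v. pair_ok Z U V u v"
proof -
  obtain v c where v: "v \<in> V" "norm v = 1" and c: "\<And>k l. transpose (Z k) *v (Z l *v v) = c k l *\<^sub>R v"
    using eigen_side[where Z=Z, OF H1 H2 sU sV nV invV invU] by blast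
  show ?thesis
  proof (cases "\<exists>k0. Z k0 *v v \<noteq> 0")
    case True
    then obtain k0 where "Z k0 *v v \<noteq> 0" by blast
    thus ?thesis using pair_case1[where Z=Z, OF H1 H2 v c _ invV sU] by blast
  next
    case False
    hence z: "\<And>k. Z k *v v = 0" by blast
    let ?Z' = "\<lambda>k. transpose (Z k)"
    have H1': "\<And>k l. ?Z' l ** transpose (?Z' k) = ?Z' k ** transpose (?Z' l)" using H2 by simp
    have H2': "\<And>k l. transpose (?Z' l) ** ?Z' k = transpose (?Z' k) ** ?Z' l" using H1 by simp
    have invU': "\<And>k y. y \<in> V \<Longrightarrow> transpose (?Z' k) *v y \<in> U" using invV by simp
    obtain u d where u: "u \<in> U" "norm u = 1" and d: "\<And>k l. transpose (?Z' k) *v (?Z' l *v u) = d k l *\<^sub>R u"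
      using eigen_side[where Z="?Z'", OF H1' H2' sV sU nU invU invU'] by blast
    show ?thesis
    proof (cases "\<exists>k0. ?Z' k0 *v u \<noteq> 0")
      case True
      then obtain k0 where "?Z' k0 *v u \<noteq> 0" by blast
      then obtain v' where "pair_ok ?Z' V U v' u"
        using pair_case1[where Z="?Z'", OF H1' H2' u d _ invU sV] by blast
      thus ?thesis using pair_ok_transpose by blast
    next
      case False
      hence z': "\<And>k. transpose (Z k) *v u = 0" by blast
      have "pair_ok Z U V u v" unfolding pair_ok_def
        using u v z z' by (simp add: dot_transpose[of u] del: transpose_matrix_vector)
      thus ?thesis by blast
    qed
  qed
qed

lemma dim_hyper:
  fixes U :: "(real^'n) set"
  assumes sU: "subspace U" and u: "u \<in> U" "norm u = 1"
  shows "subspace {x\<in>U. x \<bullet> u = 0}" and "dim U = Suc (dim {x\<in>U. x \<bullet> u = 0})"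
proof -
  let ?U' = "{x\<in>U. x \<bullet> u = 0}"
  show s: "subspace ?U'" using sU unfolding subspace_def by (auto simp: inner_add_left)
  have uu: "u \<bullet> u = 1" using u by (simp add: dot_square_norm)
  have sp: "span ?U' = ?U'" using s by (simp add: span_eq_iff)
  have "u \<notin> ?U'" using uu by simp
  hence "u \<notin> span ?U'" unfolding sp .
  hence d: "dim (insert u ?U') = Suc (dim ?U')" by (simp add: dim_insert)
  have "span (insert u ?U') = U"
  proof
    show "span (insert u ?U') \<subseteq> U" by (rule span_minimal) (use u sU in auto)
    show "U \<subseteq> span (insert u ?U')"
    proof
      fix x assume x: "x \<in> U"
      have "x - (x \<bullet> u) *\<^sub>R u \<in> ?U'" using x u sU uu
        by (simp add: subspace_diff subspace_scale inner_diff_left)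
      hence "x - (x \<bullet> u) *\<^sub>R u \<in> span (insert u ?U')" by (meson span_superset subsetD subset_insertI)
      moreover have "(x \<bullet> u) *\<^sub>R u \<in> span (insert u ?U')" by (simp add: span_base span_scale)
      ultimately have "(x - (x \<bullet> u) *\<^sub>R u) + (x \<bullet> u) *\<^sub>R u \<in> span (insert u ?U')" by (rule span_add)
      thus "x \<in> span (insert u ?U')" by simp
    qed
  qed
  hence "dim U = dim (insert u ?U')" by (metis dim_span)
  thus "dim U = Suc (dim ?U')" using d by simp
qed



lemma recursion:
  fixes Z :: "'k \<Rightarrow> real^'n^'n"
  assumes H1: "\<And>k l. Z l ** transpose (Z k) = Z k ** transpose (Z l)"
    and H2: "\<And>k l. transpose (Z l) ** Z k = transpose (Z k) ** Z l"
  shows "subspace U \<Longrightarrow> subspace V \<Longrightarrow> dim U = m \<Longrightarrow> dim V = m \<Longrightarrow>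
    (\<And>k x. x \<in> V \<Longrightarrow> Z k *v x \<in> U) \<Longrightarrow> (\<And>k y. y \<in> U \<Longrightarrow> transpose (Z k) *v y \<in> V) \<Longrightarrow>
    \<exists>f g. (\<forall>i<m. f i \<in> U \<and> g i \<in> V) \<and>
      (\<forall>i<m. \<forall>j<m. f i \<bullet> f j = (if i = j then 1 else 0) \<and> g i \<bullet> g j = (if i = j then 1 else 0)) \<and>
      (\<forall>i<m. \<forall>j<m. i \<noteq> j \<longrightarrow> (\<forall>k. f i \<bullet> (Z k *v g j) = 0))"
proof (induction m arbitrary: U V)
  case 0
  show ?case by auto
next
  case (Suc m)
  have nU: "U \<noteq> {0}" using Suc.prems(3) by (auto simp: dim_eq_0)
  have nV: "V \<noteq> {0}" using Suc.prems(4) by (auto simp: dim_eq_0)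
  obtain u v where p: "pair_ok Z U V u v"
    using pair_exists[where Z=Z, OF H1 H2 Suc.prems(1,2) nU nV Suc.prems(5,6)] by blast
  have uU: "u \<in> U" and vV: "v \<in> V" and nu: "norm u = 1" and nv: "norm v = 1"
    and pb: "\<And>k x. x \<bullet> v = 0 \<Longrightarrow> u \<bullet> (Z k *v x) = 0"
    and pc: "\<And>k y. y \<bullet> u = 0 \<Longrightarrow> y \<bullet> (Z k *v v) = 0"
    using p unfolding pair_ok_def by auto
  have uu: "u \<bullet> u = 1" using nu by (simp add: norm_eq_1)
  have vv: "v \<bullet> v = 1" using nv by (simp add: norm_eq_1)
  let ?U' = "{x\<in>U. x \<bullet> u = 0}" and ?V' = "{x\<in>V. x \<bullet> v = 0}"
  have sU': "subspace ?U'" and dU: "dim U = Suc (dim ?U')"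
    using dim_hyper[OF Suc.prems(1) uU nu] by auto
  have sV': "subspace ?V'" and dV: "dim V = Suc (dim ?V')"
    using dim_hyper[OF Suc.prems(2) vV nv] by auto
  have i1: "Z k *v x \<in> ?U'" if "x \<in> ?V'" for k x
    using that Suc.prems(5) pb[of x k] by (auto simp: inner_commute)
  have i2: "transpose (Z k) *v y \<in> ?V'" if "y \<in> ?U'" for k y
    using that Suc.prems(6) pc[of y k] dot_transpose[of y "Z k" v]
    by (auto simp del: transpose_matrix_vector)
  obtain f g where fg1: "\<forall>i<m. f i \<in> ?U' \<and> g i \<in> ?V'"
    and fg2: "\<forall>i<m. \<forall>j<m. f i \<bullet> f j = (if i = j then 1 else 0) \<and> g i \<bullet> g j = (if i = j then 1 else 0)"
    and fg3: "\<forall>i<m. \<forall>j<m. i \<noteq> j \<longrightarrow> (\<forall>k. f i \<bullet> (Z k *v g j) = 0)"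
    using Suc.IH[OF sU' sV' _ _ i1 i2] dU dV Suc.prems(3,4) by auto
  define f' where "f' = f(m := u)"
  define g' where "g' = g(m := v)"
  have c1: "\<forall>i<Suc m. f' i \<in> U \<and> g' i \<in> V"
    using fg1 uU vV unfolding f'_def g'_def by (auto simp: less_Suc_eq)
  have c2: "\<forall>i<Suc m. \<forall>j<Suc m. f' i \<bullet> f' j = (if i = j then 1 else 0) \<and> g' i \<bullet> g' j = (if i = j then 1 else 0)"
    using fg1 fg2 uu vv unfolding f'_def g'_def by (auto simp: less_Suc_eq inner_commute)
  have c3: "\<forall>i<Suc m. \<forall>j<Suc m. i \<noteq> j \<longrightarrow> (\<forall>k. f' i \<bullet> (Z k *v g' j) = 0)"
    using fg1 fg3 pb pc unfolding f'_def g'_def by (auto simp: less_Suc_eq)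
  show ?case using c1 c2 c3 by blast
qed



lemma trilin_slices:
  "trilinear_form T x y z = (\<Sum>k\<in>UNIV. z$k * (x \<bullet> (zslice T k *v y)))"
proof -
  have "(\<Sum>k\<in>UNIV. z$k * (x \<bullet> (zslice T k *v y))) = (\<Sum>k\<in>UNIV. \<Sum>i\<in>UNIV. \<Sum>j\<in>UNIV. T i j k * x$i * y$j * z$k)"
    by (simp add: zslice_def inner_vec_def matrix_vector_mult_def sum_distrib_left sum_distrib_right mult_ac)
  also have "\<dots> = (\<Sum>i\<in>UNIV. \<Sum>k\<in>UNIV. \<Sum>j\<in>UNIV. T i j k * x$i * y$j * z$k)" by (rule sum.swap)
  also have "\<dots> = (\<Sum>i\<in>UNIV. \<Sum>j\<in>UNIV. \<Sum>k\<in>UNIV. T i j k * x$i * y$j * z$k)"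
    by (rule sum.cong[OF refl], rule sum.swap)
  finally show ?thesis unfolding trilinear_form_def by simp
qed

definition dg :: "('n::finite \<Rightarrow> real) \<Rightarrow> real^'n^'n" where
  "dg d = (\<chi> p q. if p = q then d p else 0)"

lemma dg_transpose: "transpose (dg d) = dg d"
  by (auto simp: dg_def transpose_def vec_eq_iff)

lemma dg_mult: "dg (d::'n::finite \<Rightarrow> real) ** dg e = dg (\<lambda>p. d p * e p)"
proof -
  have "(\<Sum>k\<in>UNIV. (if i = k then d i else 0) * (if k = j then e k else 0)) = (if i = j then d i * e i else 0)" for i j :: 'n
  proof -
    have "(\<Sum>k\<in>UNIV. (if i = k then d i else 0) * (if k = j then e k else 0)) = (\<Sum>k\<in>UNIV. if k = i then (if i = j then d i * e i else 0) else 0)"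
      by (rule sum.cong) auto
    thus ?thesis by simp
  qed
  thus ?thesis by (simp add: dg_def matrix_matrix_mult_def vec_eq_iff)
qed

lemma dg_comm: "dg d ** dg e = dg e ** dg d"
  by (simp add: dg_mult mult.commute)

lemma sum_axis: "(\<Sum>p\<in>UNIV. f p * (axis i (1::real)) $ p) = f i"
proof -
  have "(\<Sum>p\<in>UNIV. f p * (axis i (1::real)) $ p) = (\<Sum>p\<in>UNIV. if p = i then f p else 0)"
    by (rule sum.cong) (auto simp: axis_def)
  thus ?thesis by simp
qed

lemma sum_delta_mult: "(\<Sum>p\<in>UNIV. f p * (if p = (q::'n::finite) then g p else (0::real))) = f q * g q"
proof -
  have "(\<Sum>p\<in>UNIV. f p * (if p = q then g p else (0::real))) = (\<Sum>p\<in>UNIV. if p = q then f p * g p else 0)"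
    by (rule sum.cong) auto
  thus ?thesis by simp
qed

lemma fwd:
  fixes T :: "'n::finite \<Rightarrow> 'n \<Rightarrow> 'n \<Rightarrow> real"
  assumes oA: "orthogonal_matrix A" and oB: "orthogonal_matrix B"
    and eq: "\<forall>x y z. trilinear_form T x y z = diag_form \<alpha> (A *v x) (B *v y) (C *v z)"
  shows "symmetric_matrix (zslice T k ** transpose (zslice T l)) \<and>
         symmetric_matrix (transpose (zslice T k) ** zslice T l)"
proof -
  define D where "D k = dg (\<lambda>p. \<alpha> p * C$p$k)" for k
  have Z: "zslice T k = transpose A ** D k ** B" for k
  proof -
    have "T i j k = trilinear_form T (axis i 1) (axis j 1) (axis k 1)" for i j
      unfolding trilinear_form_def by (simp add: sum_axis)
    hence Te: "T i j k = (\<Sum>p\<in>UNIV. \<alpha> p * A$p$i * B$p$j * C$p$k)" for i j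
      using eq by (simp add: diag_form_def matrix_vector_mult_basis column_def)
    have "(transpose A ** D k ** B) $ i $ j = (\<Sum>p\<in>UNIV. \<alpha> p * A$p$i * B$p$j * C$p$k)" for i j
      by (simp add: D_def dg_def matrix_matrix_mult_def transpose_def sum_delta_mult mult_ac)
    thus ?thesis using Te by (simp add: zslice_def vec_eq_iff)
  qed
  have AA: "X ** A ** transpose A = X" for X
    using oA unfolding orthogonal_matrix_def by (metis matrix_mul_assoc matrix_mul_rid)
  have BB: "X ** B ** transpose B = X" for X
    using oB unfolding orthogonal_matrix_def by (metis matrix_mul_assoc matrix_mul_rid)
  have e1: "zslice T k ** transpose (zslice T l) = transpose A ** (D k ** D l) ** A" for k l
    unfolding Z by (simp add: matrix_transpose_mul matrix_mul_assoc BB D_def dg_transpose)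
  have e2: "transpose (zslice T k) ** zslice T l = transpose B ** (D k ** D l) ** B" for k l
    unfolding Z by (simp add: matrix_transpose_mul matrix_mul_assoc AA D_def dg_transpose)
  show ?thesis unfolding symmetric_matrix_def e1 e2
    by (simp add: matrix_transpose_mul matrix_mul_assoc D_def dg_transpose dg_comm)
qed

lemma bwd:
  fixes T :: "'n::finite \<Rightarrow> 'n \<Rightarrow> 'n \<Rightarrow> real"
  assumes S: "\<forall>k l. symmetric_matrix (zslice T k ** transpose (zslice T l)) \<and>
                symmetric_matrix (transpose (zslice T k) ** zslice T l)"
  shows "\<exists>(A::real^'n^'n) (B::real^'n^'n) (C::real^'n^'n) (\<alpha>::'n \<Rightarrow> real).
            orthogonal_matrix A \<and> orthogonal_matrix B \<and>
            (\<forall>x y z. trilinear_form T x y z = diag_form \<alpha> (A *v x) (B *v y) (C *v z))"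
proof -
  define Z where "Z = zslice T"
  have H1: "Z l ** transpose (Z k) = Z k ** transpose (Z l)" for k l
    using S unfolding Z_def symmetric_matrix_def by (metis matrix_transpose_mul transpose_transpose)
  have H2: "transpose (Z l) ** Z k = transpose (Z k) ** Z l" for k l
    using S unfolding Z_def symmetric_matrix_def by (metis matrix_transpose_mul transpose_transpose)
  obtain f g where fg1: "\<forall>i<CARD('n). f i \<in> (UNIV::(real^'n) set) \<and> g i \<in> (UNIV::(real^'n) set)"
    and fg2: "\<forall>i<CARD('n). \<forall>j<CARD('n). f i \<bullet> f j = (if i = j then 1 else 0) \<and> g i \<bullet> g j = (if i = j then 1 else 0)"
    and fg3: "\<forall>i<CARD('n). \<forall>j<CARD('n). i \<noteq> j \<longrightarrow> (\<forall>k. f i \<bullet> (Z k *v g j) = 0)"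
    using recursion[where Z=Z, OF H1 H2, of UNIV UNIV "CARD('n)"] by auto
  obtain h where h: "bij_betw h (UNIV::'n set) {0..<CARD('n)}"
    using ex_bij_betw_finite_nat[of "UNIV::'n set"] by auto
  have hlt: "h i < CARD('n)" for i using h by (auto simp: bij_betw_def)
  have hinj: "h i = h j \<longleftrightarrow> i = j" for i j using h by (auto simp: bij_betw_def inj_on_def)
  define A :: "real^'n^'n" where "A = (\<chi> i. f (h i))"
  define B :: "real^'n^'n" where "B = (\<chi> i. g (h i))"
  define C :: "real^'n^'n" where "C = (\<chi> i k. f (h i) \<bullet> (Z k *v g (h i)))"
  have ff: "f (h i) \<bullet> f (h j) = (if i = j then 1 else 0)" for i j using fg2 hlt hinj by auto
  have gg: "g (h i) \<bullet> g (h j) = (if i = j then 1 else 0)" for i j using fg2 hlt hinj by auto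
  have cross: "i \<noteq> j \<Longrightarrow> f (h i) \<bullet> (Z k *v g (h j)) = 0" for i j k using fg3 hlt hinj by auto
  have oA: "orthogonal_matrix A"
  proof -
    have "A ** transpose A = mat 1"
      using ff by (simp add: vec_eq_iff A_def matrix_matrix_mult_def transpose_def mat_def inner_vec_def)
    thus ?thesis unfolding orthogonal_matrix_def using matrix_left_right_inverse by blast
  qed
  have oB: "orthogonal_matrix B"
  proof -
    have "B ** transpose B = mat 1"
      using gg by (simp add: vec_eq_iff B_def matrix_matrix_mult_def transpose_def mat_def inner_vec_def)
    thus ?thesis unfolding orthogonal_matrix_def using matrix_left_right_inverse by blast
  qed
  have Av: "(A *v w) $ i = f (h i) \<bullet> w" for w i
    by (simp add: A_def matrix_vector_mult_def inner_vec_def)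
  have key: "x \<bullet> (Z k *v y) = (\<Sum>i\<in>UNIV. (A *v x)$i * ((B *v y)$i * C$i$k))" for x y k
  proof -
    have xA: "x = transpose A *v (A *v x)"
      using oA unfolding orthogonal_matrix_def by (simp add: matrix_vector_mul_assoc del: transpose_matrix_vector)
    have yB: "y = (\<Sum>j\<in>UNIV. (B *v y)$j *\<^sub>R g (h j))"
    proof -
      have "y = transpose B *v (B *v y)"
        using oB unfolding orthogonal_matrix_def by (simp add: matrix_vector_mul_assoc del: transpose_matrix_vector)
      also have "\<dots> = (\<Sum>j\<in>UNIV. (B *v y)$j *\<^sub>R g (h j))"
        unfolding matrix_vector_column by (simp add: B_def scalar_mult_eq_scaleR)
      finally show ?thesis .
    qed
    have fi: "f (h i) \<bullet> (Z k *v y) = (B *v y)$i * C$i$k" for i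
    proof -
      have "f (h i) \<bullet> (Z k *v y) = (\<Sum>j\<in>UNIV. (B *v y)$j * (f (h i) \<bullet> (Z k *v g (h j))))"
        by (subst yB) (simp add: vec.sum matrix_vector_mult_scaleR inner_sum_right)
      also have "\<dots> = (\<Sum>j\<in>UNIV. if j = i then (B *v y)$j * (f (h i) \<bullet> (Z k *v g (h j))) else 0)"
        by (rule sum.cong) (auto simp: cross)
      also have "\<dots> = (B *v y)$i * C$i$k" by (simp add: C_def)
      finally show ?thesis .
    qed
    have "x \<bullet> (Z k *v y) = (A *v x) \<bullet> (A *v (Z k *v y))"
      by (subst xA) (simp add: dot_transpose del: transpose_matrix_vector)
    also have "\<dots> = (\<Sum>i\<in>UNIV. (A *v x)$i * (A *v (Z k *v y))$i)" by (simp only: inner_vec_def inner_real_def)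
    also have "\<dots> = (\<Sum>i\<in>UNIV. (A *v x)$i * ((B *v y)$i * C$i$k))"
      by (simp only: Av[of "Z k *v y"] fi)
    finally show ?thesis .
  qed
  have "trilinear_form (\<lambda>i j k. T i j k) x y z = diag_form (\<lambda>_. 1) (A *v x) (B *v y) (C *v z)" for x y z
  proof -
    have "trilinear_form T x y z = (\<Sum>k\<in>UNIV. z$k * (\<Sum>i\<in>UNIV. (A *v x)$i * ((B *v y)$i * C$i$k)))"
      unfolding trilin_slices Z_def[symmetric] key ..
    also have "\<dots> = (\<Sum>k\<in>UNIV. \<Sum>i\<in>UNIV. (A *v x)$i * (B *v y)$i * (C$i$k * z$k))"
      by (simp add: sum_distrib_left mult_ac)
    also have "\<dots> = (\<Sum>i\<in>UNIV. \<Sum>k\<in>UNIV. (A *v x)$i * (B *v y)$i * (C$i$k * z$k))"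
      by (rule sum.swap)
    also have "\<dots> = diag_form (\<lambda>_. 1) (A *v x) (B *v y) (C *v z)"
      by (simp add: diag_form_def matrix_vector_mult_def sum_distrib_left)
    finally show ?thesis by simp
  qed
  thus ?thesis using oA oB by blast
qed

theorem proposition34:
  fixes T :: "'n::finite \<Rightarrow> 'n \<Rightarrow> 'n \<Rightarrow> real"
  shows "(\<exists>(A::real^'n^'n) (B::real^'n^'n) (C::real^'n^'n) (\<alpha>::'n \<Rightarrow> real).
            orthogonal_matrix A \<and> orthogonal_matrix B \<and>
            (\<forall>x y z. trilinear_form T x y z = diag_form \<alpha> (A *v x) (B *v y) (C *v z)))
     \<longleftrightarrow> (\<forall>k l. symmetric_matrix (zslice T k ** transpose (zslice T l)) \<and>
                symmetric_matrix (transpose (zslice T k) ** zslice T l))"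
  using fwd bwd by metis

end
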